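(* Let $\mu$ be a translation bounded measure on $\mathbb R^d$ and $\{h_R\}$ a smooth approximate van Hove family. Then $\{h_R\}$ is strong for $\mu$, i.e. the set $\{\frac1{\mathrm{vol}(B_R)}(h_R\mu)*\widetilde{(h_R\mu)}:R\ge1\}$ is weak-$*$ precompact in $\mathcal S'(\mathbb R^d)$.
   Context: A measure $\mu$ is translation bounded if $\sup_x|\mu|(x+K)<\infty$ for each compact $K$; such measures are tempered distributions. A smooth approximate van Hove family is a family $\{h_R\}_{R\ge1}$ of smooth compactly supported functions with $1_{B_R}\le h_R\le 1_{\overline{B_{R+1}}}$. $(h\mu)(f)=\mu(hf)$, $\widetilde f(x)=\overline{f(-x)}$, $\widetilde\psi(f)=\overline{\psi(\widetilde f)}$. *)

theory Defs
  imports "HOL-Analysis.Analysis"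
begin

text \<open>Iterated directional derivatives along a list of directions
  (Frechet derivative applied to the direction); head of list is the last derivative taken.\<close>
fun pderivs :: "'a::euclidean_space list \<Rightarrow> ('a \<Rightarrow> 'b::real_normed_vector) \<Rightarrow> 'a \<Rightarrow> 'b" where
  "pderivs [] f = f"
| "pderivs (v # vs) f = (\<lambda>x. frechet_derivative (pderivs vs f) (at x) v)"

definition smooth_fun :: "('a::euclidean_space \<Rightarrow> 'b::real_normed_vector) \<Rightarrow> bool" where
  "smooth_fun f \<longleftrightarrow> (\<forall>vs. set vs \<subseteq> Basis \<longrightarrow> (\<forall>x. pderivs vs f differentiable (at x)))"

definition schwartz :: "('a::euclidean_space \<Rightarrow> complex) set" where
  "schwartz = {f. smooth_fun f \<and>
     (\<forall>vs n. set vs \<subseteq> Basis \<longrightarrow> bounded (range (\<lambda>x. (1 + norm x) ^ n *\<^sub>R pderivs vs f x)))}"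

text \<open>A functional is represented as a total function
  that vanishes outside the Schwartz space, so that the weak-* topology of S' is the
  subspace topology of the product (pointwise) topology on the function type.\<close>
definition tempered_distributions :: "(('a::euclidean_space \<Rightarrow> complex) \<Rightarrow> complex) set" where
  "tempered_distributions = {T.
     (\<forall>f. f \<notin> schwartz \<longrightarrow> T f = 0) \<and>
     (\<forall>f\<in>schwartz. \<forall>g\<in>schwartz. \<forall>a b. T (\<lambda>x. a * f x + b * g x) = a * T f + b * T g) \<and>
     (\<exists>C N. \<forall>f\<in>schwartz. \<forall>M.
        (\<forall>x vs. length vs \<le> N \<longrightarrow> set vs \<subseteq> Basis \<longrightarrow>
             (1 + norm x) ^ N * norm (pderivs vs f x) \<le> M) \<longrightarrow> norm (T f) \<le> C * M)}"

definition weak_star_precompact :: "(('a::euclidean_space \<Rightarrow> complex) \<Rightarrow> complex) set \<Rightarrow> bool" where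
  "weak_star_precompact A \<longleftrightarrow> A \<subseteq> tempered_distributions \<and>
     compact (tempered_distributions \<inter> closure A)"

text \<open>A complex Radon measure mu is represented by its polar decomposition
  d mu = g d nu, with nu = |mu| a positive Borel measure and |g| = 1.
  Translation boundedness: sup_x |mu|(x + K) < infinity for every compact K.\<close>
definition translation_bounded :: "'a::euclidean_space measure \<Rightarrow> ('a \<Rightarrow> complex) \<Rightarrow> bool" where
  "translation_bounded \<nu> g \<longleftrightarrow> sets \<nu> = sets borel \<and> g \<in> borel_measurable borel \<and>
     (\<forall>x. norm (g x) = 1) \<and>
     (\<forall>K. compact K \<longrightarrow> (\<exists>C::real. \<forall>x. emeasure \<nu> ((\<lambda>y. x + y) ` K) \<le> ennreal C))"

definition smooth_approx_van_Hove :: "(real \<Rightarrow> 'a::euclidean_space \<Rightarrow> real) \<Rightarrow> bool" where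
  "smooth_approx_van_Hove h \<longleftrightarrow> (\<forall>R\<ge>1. smooth_fun (h R) \<and> compact (closure {x. h R x \<noteq> 0}) \<and>
     (\<forall>x. indicator (ball 0 R) x \<le> h R x \<and> h R x \<le> indicator (cball 0 (R + 1)) x))"

text \<open>The tempered distribution (1/vol B_R) (h mu) * (h mu)~ applied to f:
  with d mu = g d nu,  ((h mu) * (h mu)~)(f) = int int f(x - y) h(x) g(x) h(y) cnj(g y) dnu(x) dnu(y).\<close>
definition autocorr_approx ::
  "'a::euclidean_space measure \<Rightarrow> ('a \<Rightarrow> complex) \<Rightarrow> ('a \<Rightarrow> real) \<Rightarrow> real \<Rightarrow> ('a \<Rightarrow> complex) \<Rightarrow> complex" where
  "autocorr_approx \<nu> g hR R f =
     (if f \<in> schwartz then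
        complex_of_real (1 / measure lborel (ball (0::'a) R)) *
        (\<integral>y. (\<integral>x. f (x - y) * complex_of_real (hR x) * g x
                       * complex_of_real (hR y) * cnj (g y) \<partial>\<nu>) \<partial>\<nu>)
      else 0)"

end

theory Submission
  imports Defs
begin


lemma pderivs_lin:
  fixes f g :: "'a::euclidean_space \<Rightarrow> complex"
  assumes "smooth_fun f" "smooth_fun g" "set vs \<subseteq> Basis"
  shows "pderivs vs (\<lambda>x. a * f x + b * g x) = (\<lambda>x. a * pderivs vs f x + b * pderivs vs g x)"
  using assms(3)
proof (induction vs)
  case Nil
  then show ?case by simp
next
  case (Cons v vs)
  have IH: "pderivs vs (\<lambda>x. a * f x + b * g x) = (\<lambda>x. a * pderivs vs f x + b * pderivs vs g x)"
    using Cons by simp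
  show ?case
  proof
    fix x
    have df: "(pderivs vs f has_derivative frechet_derivative (pderivs vs f) (at x)) (at x)"
      using assms(1) Cons.prems unfolding smooth_fun_def frechet_derivative_works[symmetric] by auto
    have dg: "(pderivs vs g has_derivative frechet_derivative (pderivs vs g) (at x)) (at x)"
      using assms(2) Cons.prems unfolding smooth_fun_def frechet_derivative_works[symmetric] by auto
    have "((\<lambda>x. a * pderivs vs f x + b * pderivs vs g x) has_derivative
        (\<lambda>w. a * frechet_derivative (pderivs vs f) (at x) w + b * frechet_derivative (pderivs vs g) (at x) w)) (at x)"
      by (intro has_derivative_add has_derivative_mult_right df dg)
    from frechet_derivative_at[OF this]
    show "pderivs (v # vs) (\<lambda>x. a * f x + b * g x) x =
         a * pderivs (v # vs) f x + b * pderivs (v # vs) g x"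
      by (simp add: IH) (metis)
  qed
qed

lemma schwartz_lin:
  assumes "f \<in> schwartz" "g \<in> schwartz"
  shows "(\<lambda>x. a * f x + b * g x) \<in> schwartz"
proof -
  have sf: "smooth_fun f" and sg: "smooth_fun g" using assms by (auto simp: schwartz_def)
  have "smooth_fun (\<lambda>x. a * f x + b * g x)"
    unfolding smooth_fun_def
  proof (intro allI impI)
    fix vs :: "'a list" and x assume vs: "set vs \<subseteq> Basis"
    have "pderivs vs f differentiable (at x)" "pderivs vs g differentiable (at x)"
      using sf sg vs by (auto simp: smooth_fun_def)
    then show "pderivs vs (\<lambda>x. a * f x + b * g x) differentiable (at x)"
      by (simp add: pderivs_lin[OF sf sg vs] differentiable_add differentiable_mult)
  qed
  moreover have "bounded (range (\<lambda>x. (1 + norm x) ^ n *\<^sub>R pderivs vs (\<lambda>x. a * f x + b * g x) x))"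
    if vs: "set vs \<subseteq> Basis" for vs n
  proof -
    obtain B1 where B1: "\<And>x. norm ((1 + norm x) ^ n *\<^sub>R pderivs vs f x) \<le> B1"
      using assms vs unfolding schwartz_def bounded_iff by (auto simp: norm_mult) blast
    obtain B2 where B2: "\<And>x. norm ((1 + norm x) ^ n *\<^sub>R pderivs vs g x) \<le> B2"
      using assms vs unfolding schwartz_def bounded_iff by (auto simp: norm_mult) blast
    have "norm ((1 + norm x) ^ n *\<^sub>R pderivs vs (\<lambda>x. a * f x + b * g x) x) \<le> norm a * B1 + norm b * B2" for x
    proof -
      have "(1 + norm x) ^ n *\<^sub>R pderivs vs (\<lambda>x. a * f x + b * g x) x
          = a * ((1 + norm x) ^ n *\<^sub>R pderivs vs f x) + b * ((1 + norm x) ^ n *\<^sub>R pderivs vs g x)"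
        by (simp add: pderivs_lin[OF sf sg vs] algebra_simps scaleR_conv_of_real)
      also have "norm \<dots> \<le> norm a * B1 + norm b * B2"
        by (rule order_trans[OF norm_triangle_ineq]) (auto simp: norm_mult mult.left_commute[of "(1 + norm x) ^ n"] intro!: add_mono mult_left_mono B1[simplified] B2[simplified])
      finally show ?thesis .
    qed
    then show ?thesis unfolding bounded_iff by blast
  qed
  ultimately show ?thesis by (simp add: schwartz_def)
qed

lemma schwartz_cont: "f \<in> schwartz \<Longrightarrow> continuous_on UNIV f"
  unfolding schwartz_def smooth_fun_def
  by (auto intro!: continuous_at_imp_continuous_on differentiable_imp_continuous_within
      elim!: allE[of _ "[]"])

lemma schwartz_bdd: "f \<in> schwartz \<Longrightarrow> \<exists>B. \<forall>x. norm (f x) \<le> B"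
  unfolding schwartz_def bounded_iff
  by (auto elim!: allE[of _ "[]"] allE[of _ "0::nat"]) blast



lemma tb_sets: "translation_bounded \<nu> g \<Longrightarrow> sets \<nu> = sets borel"
  by (simp add: translation_bounded_def)

lemma tb_unit:
  assumes "translation_bounded \<nu> (g::'a::euclidean_space \<Rightarrow> complex)"
  shows "\<exists>C0\<ge>0. \<forall>x. emeasure \<nu> ((\<lambda>y. x + y) ` cbox (0::'a) One) \<le> ennreal C0"
proof -
  obtain C where C: "\<And>x. emeasure \<nu> ((\<lambda>y. x + y) ` cbox (0::'a) One) \<le> ennreal C"
    using assms unfolding translation_bounded_def by (meson compact_cbox)
  show ?thesis
    by (rule exI[of _ "max 0 C"]) (auto intro: order_trans[OF C] ennreal_leI)
qed

lemma cover_cball: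
  fixes y :: "'a::euclidean_space" and r :: real
  assumes "r \<ge> 0"
  defines "m \<equiv> nat \<lfloor>2*r\<rfloor> + 1"
  defines "z \<equiv> (\<lambda>p. \<Sum>i\<in>Basis. (y \<bullet> i - r + real (p i)) *\<^sub>R i)"
  shows "cball y r \<subseteq> (\<Union>p\<in>PiE Basis (\<lambda>_. {..<m}). (\<lambda>w. z p + w) ` cbox 0 One)"
proof
  fix x assume x: "x \<in> cball y r"
  define p where "p = restrict (\<lambda>i. nat \<lfloor>x \<bullet> i - y \<bullet> i + r\<rfloor>) Basis"
  have zi: "z p \<bullet> i = y \<bullet> i - r + real (p i)" if "i \<in> Basis" for i
    using that unfolding z_def by (simp add: inner_sum_left inner_Basis if_distrib sum.delta cong: if_cong)
  have bd: "\<bar>x \<bullet> i - y \<bullet> i\<bar> \<le> r" if "i \<in> Basis" for i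
    using x that Basis_le_norm[OF that, of "x - y"] by (auto simp: dist_norm inner_diff_left norm_minus_commute)
  have pi: "real (p i) = of_int \<lfloor>x \<bullet> i - y \<bullet> i + r\<rfloor>" if "i \<in> Basis" for i
    using that bd[OF that] by (simp add: p_def)
  have "p \<in> PiE Basis (\<lambda>_. {..<m})"
  proof -
    have "p i < m" if "i \<in> Basis" for i
    proof -
      have "\<lfloor>x \<bullet> i - y \<bullet> i + r\<rfloor> \<le> \<lfloor>2*r\<rfloor>" using bd[OF that] by (intro floor_mono) linarith
      then show ?thesis using that bd[OF that] unfolding p_def m_def by simp
    qed
    then show ?thesis by (auto simp: p_def)
  qed
  moreover have "x - z p \<in> cbox 0 One"
    unfolding mem_box
  proof (intro ballI conjI)
    fix i :: 'a assume i: "i \<in> Basis"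
    have eq: "(x - z p) \<bullet> i = (x \<bullet> i - y \<bullet> i + r) - of_int \<lfloor>x \<bullet> i - y \<bullet> i + r\<rfloor>"
      using zi[OF i] pi[OF i] by (simp add: inner_diff_left)
    show "0 \<bullet> i \<le> (x - z p) \<bullet> i" using eq by simp
    show "(x - z p) \<bullet> i \<le> One \<bullet> i" using eq i by simp linarith
  qed
  ultimately show "x \<in> (\<Union>p\<in>PiE Basis (\<lambda>_. {..<m}). (\<lambda>w. z p + w) ` cbox 0 One)"
    by (auto intro!: bexI[of _ p] image_eqI[of _ _ "x - z p"])
qed

lemma tb_growth:
  assumes "translation_bounded \<nu> (g::'a::euclidean_space \<Rightarrow> complex)"
  shows "\<exists>C\<ge>0. \<forall>y r. r \<ge> 1 \<longrightarrow> emeasure \<nu> (cball y r) \<le> ennreal (C * r ^ DIM('a))"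
proof -
  obtain C0 where C0: "C0 \<ge> 0" "\<And>x. emeasure \<nu> ((\<lambda>y. x + y) ` cbox (0::'a) One) \<le> ennreal C0"
    using tb_unit[OF assms] by blast
  have sets: "sets \<nu> = sets borel" using assms by (simp add: translation_bounded_def)
  have "emeasure \<nu> (cball y r) \<le> ennreal (C0 * 3 ^ DIM('a) * r ^ DIM('a))" if r: "r \<ge> 1" for y r
  proof -
    define m where "m \<equiv> nat \<lfloor>2*r\<rfloor> + 1"
    define z where "z \<equiv> (\<lambda>p. \<Sum>i\<in>Basis. (y \<bullet> i - r + real (p i)) *\<^sub>R (i::'a))"
    define P where "P = PiE (Basis::'a set) (\<lambda>_. {..<m})"
    have fin: "finite P" unfolding P_def by (simp add: finite_PiE)
    have meas: "(\<lambda>p. (\<lambda>w. z p + w) ` cbox 0 One) ` P \<subseteq> sets \<nu>"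
      unfolding sets by (auto intro!: borel_closed compact_imp_closed compact_translation)
    have "emeasure \<nu> (cball y r) \<le> emeasure \<nu> (\<Union>p\<in>P. (\<lambda>w. z p + w) ` cbox 0 One)"
      using cover_cball[of r y] r meas unfolding m_def z_def P_def
      by (intro emeasure_mono) (auto intro!: sets.finite_UN simp: finite_PiE)
    also have "\<dots> \<le> (\<Sum>p\<in>P. emeasure \<nu> ((\<lambda>w. z p + w) ` cbox 0 One))"
      by (rule emeasure_subadditive_finite[OF fin meas])
    also have "\<dots> \<le> of_nat (card P) * ennreal C0"
      by (rule sum_bounded_above) (rule C0(2))
    also have "card P = m ^ DIM('a)"
      unfolding P_def by (simp add: card_PiE)
    also have "of_nat (m ^ DIM('a)) * ennreal C0 = ennreal (real m ^ DIM('a) * C0)"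
      by (simp add: ennreal_mult' ennreal_of_nat_eq_real_of_nat)
    also have "\<dots> \<le> ennreal (C0 * 3 ^ DIM('a) * r ^ DIM('a))"
    proof (rule ennreal_leI)
      have "real m \<le> 3 * r" unfolding m_def using r by linarith
      then have "real m ^ DIM('a) \<le> (3 * r) ^ DIM('a)" by (intro power_mono) auto
      then show "real m ^ DIM('a) * C0 \<le> C0 * 3 ^ DIM('a) * r ^ DIM('a)"
        using C0(1) by (simp add: power_mult_distrib mult.commute mult.left_commute mult_left_mono)
    qed
    finally show ?thesis .
  qed
  then show ?thesis using C0(1) by (intro exI[of _ "C0 * 3 ^ DIM('a)"]) auto
qed



lemma pointwise_decay:
  fixes t :: real and N :: nat
  assumes t: "t \<ge> 0"
  shows "ennreal (1 / (1 + t) ^ N) \<le> (\<Sum>k. ennreal (2 ^ N / 2 ^ (k * N)) * (if t \<le> 2 ^ k then 1 else 0))"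
proof -
  have "\<exists>n. t < (2::real) ^ n" by (rule real_arch_pow) simp
  then obtain n where "t < 2 ^ n" by blast
  define k0 where "k0 = (LEAST k::nat. t \<le> 2 ^ k)"
  have k0: "t \<le> 2 ^ k0"
    using LeastI[of "\<lambda>k. t \<le> (2::real) ^ k" n] \<open>t < 2^n\<close> unfolding k0_def by simp
  have single: "1 / (1 + t) ^ N \<le> 2 ^ N / 2 ^ (k0 * N)"
  proof (cases k0)
    case 0
    have "1 \<le> (1 + t) ^ N" using t by (simp add: one_le_power)
    then have "1 / (1 + t) ^ N \<le> 1" by simp
    also have "1 \<le> (2::real) ^ N" by simp
    finally show ?thesis using 0 by simp
  next
    case (Suc j)
    have "\<not> t \<le> 2 ^ j"
      using not_less_Least[of j "\<lambda>k. t \<le> 2 ^ k"] Suc unfolding k0_def by simp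
    then have "2 ^ j \<le> t" by simp
    then have "(2 ^ j) ^ N \<le> (1 + t) ^ N" by (intro power_mono) auto
    then have "1 / (1 + t) ^ N \<le> 1 / (2 ^ j) ^ N"
      using t by (intro divide_left_mono) (auto intro!: mult_pos_pos)
    also have "1 / (2 ^ j) ^ N = (2::real) ^ N / 2 ^ (k0 * N)"
    proof -
      have "(2::real) ^ (k0 * N) = 2 ^ N * (2 ^ j) ^ N"
        using Suc by (simp add: power_add power_mult[symmetric])
      then show ?thesis by simp
    qed
    finally show ?thesis .
  qed
  have "ennreal (1 / (1 + t) ^ N) \<le> (\<Sum>k\<in>{k0}. ennreal (2 ^ N / 2 ^ (k * N)) * (if t \<le> 2 ^ k then 1 else 0))"
    using k0 single by (simp add: ennreal_leI)
  also have "\<dots> \<le> (\<Sum>k. ennreal (2 ^ N / 2 ^ (k * N)) * (if t \<le> 2 ^ k then 1 else 0))"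
    by (rule sum_le_suminf) (simp_all add: summableI)
  finally show ?thesis .
qed

lemma tb_decay:
  assumes tb: "translation_bounded \<nu> (g::'a::euclidean_space \<Rightarrow> complex)"
  shows "\<exists>C\<ge>0. \<forall>y. (\<integral>\<^sup>+x. ennreal (1 / (1 + norm (x - y)) ^ Suc DIM('a)) \<partial>\<nu>) \<le> ennreal C"
proof -
  obtain C where C: "C \<ge> 0" "\<And>y r. r \<ge> 1 \<Longrightarrow> emeasure \<nu> (cball y r) \<le> ennreal (C * r ^ DIM('a))"
    using tb_growth[OF tb] by blast
  have sets: "sets \<nu> = sets borel" using tb by (simp add: translation_bounded_def)
  define N where "N = Suc DIM('a)"
  have "(\<integral>\<^sup>+x. ennreal (1 / (1 + norm (x - y)) ^ N) \<partial>\<nu>) \<le> ennreal (2 ^ N * C * 2)" for y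
  proof -
    have "(\<integral>\<^sup>+x. ennreal (1 / (1 + norm (x - y)) ^ N) \<partial>\<nu>)
        \<le> (\<integral>\<^sup>+x. (\<Sum>k. ennreal (2 ^ N / 2 ^ (k * N)) * indicator (cball y (2 ^ k)) x) \<partial>\<nu>)"
      by (intro nn_integral_mono order_trans[OF pointwise_decay])
        (auto simp: indicator_def dist_norm norm_minus_commute of_bool_def)
    also have "\<dots> = (\<Sum>k. (\<integral>\<^sup>+x. ennreal (2 ^ N / 2 ^ (k * N)) * indicator (cball y (2 ^ k)) x \<partial>\<nu>))"
      by (rule nn_integral_suminf) (simp add: measurable_cong_sets[OF sets refl] borel_measurable_times_ennreal borel_measurable_indicator borel_closed)
    also have "\<dots> = (\<Sum>k. ennreal (2 ^ N / 2 ^ (k * N)) * emeasure \<nu> (cball y (2 ^ k)))"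
      by (subst nn_integral_cmult_indicator) (auto simp: sets)
    also have "\<dots> \<le> (\<Sum>k. ennreal (2 ^ N * C * (1/2) ^ k))"
    proof (rule suminf_le)
      fix k :: nat
      have "ennreal (2 ^ N / 2 ^ (k * N)) * emeasure \<nu> (cball y (2 ^ k))
          \<le> ennreal (2 ^ N / 2 ^ (k * N)) * ennreal (C * (2 ^ k) ^ DIM('a))"
        by (intro mult_left_mono C(2)) auto
      also have "\<dots> = ennreal (2 ^ N / 2 ^ (k * N) * (C * (2 ^ k) ^ DIM('a)))"
        using C(1) by (subst ennreal_mult) auto
      also have "2 ^ N / 2 ^ (k * N) * (C * (2 ^ k) ^ DIM('a)) = 2 ^ N * C * (1/2::real) ^ k"
      proof -
        have kn: "k * N = k * DIM('a) + k" by (simp add: N_def)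
        have e: "(2::real) ^ (k * N) = (2 ^ k) ^ DIM('a) * 2 ^ k"
          unfolding kn by (simp add: power_add power_mult)
        show ?thesis unfolding e by (simp add: power_one_over)
      qed
      finally show "ennreal (2 ^ N / 2 ^ (k * N)) * emeasure \<nu> (cball y (2 ^ k)) \<le> ennreal (2 ^ N * C * (1/2) ^ k)" .
    qed (simp_all add: summableI)
    also have "\<dots> = ennreal (2 ^ N * C * 2)"
    proof (rule suminf_ennreal_eq)
      show "(\<lambda>k. 2 ^ N * C * (1/2::real) ^ k) sums (2 ^ N * C * 2)"
        using sums_mult[OF geometric_sums[of "1/2::real"], of "2 ^ N * C"] by simp
    qed (use C(1) in simp_all)
    finally show ?thesis .
  qed
  then show ?thesis using C(1) unfolding N_def by (intro exI[of _ "2 ^ Suc DIM('a) * C * 2"]) auto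
qed



lemma norm_integral_le_nn:
  fixes f :: "'b \<Rightarrow> 'c::{banach, second_countable_topology}"
  shows "ennreal (norm (integral\<^sup>L M f)) \<le> (\<integral>\<^sup>+x. norm (f x) \<partial>M)"
proof (cases "integrable M f")
  case True then show ?thesis by (rule integral_norm_bound_ennreal)
next
  case False then show ?thesis by (simp add: not_integrable_integral_eq)
qed

lemma tb_sigma_finite:
  assumes tb: "translation_bounded \<nu> (g::'a::euclidean_space \<Rightarrow> complex)"
  shows "sigma_finite_measure \<nu>"
proof
  have sets: "sets \<nu> = sets borel" using tb by (simp add: translation_bounded_def)
  have sp: "space \<nu> = UNIV" using sets_eq_imp_space_eq[OF sets] by simp
  have fin: "emeasure \<nu> (cball 0 (real n)) \<noteq> \<infinity>" for n
  proof -
    obtain C where "\<And>x. emeasure \<nu> ((\<lambda>y. x + y) ` cball (0::'a) (real n)) \<le> ennreal C"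
      using tb unfolding translation_bounded_def by (meson compact_cball)
    from this[of 0] show ?thesis by (auto simp: top_unique)
  qed
  show "\<exists>A. countable A \<and> A \<subseteq> sets \<nu> \<and> \<Union> A = space \<nu> \<and> (\<forall>a\<in>A. emeasure \<nu> a \<noteq> \<infinity>)"
  proof (intro exI[of _ "range (\<lambda>n. cball (0::'a) (real n))"] conjI)
    show "\<Union> (range (\<lambda>n. cball (0::'a) (real n))) = space \<nu>"
      unfolding sp
    proof (safe)
      fix x :: 'a
      obtain n where "norm x \<le> real n" using real_arch_simple by blast
      then show "x \<in> \<Union> (range (\<lambda>n. cball (0::'a) (real n)))" by auto
    qed auto
  qed (use fin sets in auto)
qed

context
  fixes \<nu> :: "'a::euclidean_space measure" and g :: "'a \<Rightarrow> complex"
    and hR :: "'a \<Rightarrow> real" and R :: real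
  assumes tb: "translation_bounded \<nu> g"
    and hs: "smooth_fun hR"
    and hb: "\<And>x. indicator (ball 0 R) x \<le> hR x \<and> hR x \<le> indicator (cball 0 (R + 1)) x"
begin

lemma sets_nu: "sets \<nu> = sets borel" using tb by (simp add: translation_bounded_def)
lemma space_nu: "space \<nu> = UNIV" using sets_eq_imp_space_eq[OF sets_nu] by simp

lemma g_meas[measurable]: "g \<in> borel_measurable borel"
  using tb by (simp add: translation_bounded_def)
lemma g_norm: "norm (g x) = 1"
  using tb by (simp add: translation_bounded_def)

lemma hR_nonneg: "0 \<le> hR x" using hb[of x] by (cases "norm x < R"; cases "norm x \<le> R + 1") (auto simp: indicator_def)
lemma hR_le1: "hR x \<le> 1" using hb[of x] by (cases "norm x < R"; cases "norm x \<le> R + 1") (auto simp: indicator_def)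
lemma hR_out: "x \<notin> cball 0 (R + 1) \<Longrightarrow> hR x = 0"
  using hb[of x] hR_nonneg[of x] by (auto simp: indicator_def)
lemma hR_le_ind: "hR x \<le> indicator (cball 0 (R + 1)) x" using hb[of x] by simp

lemma hR_meas[measurable]: "hR \<in> borel_measurable borel"
  using hs unfolding smooth_fun_def
  by (intro borel_measurable_continuous_onI continuous_at_imp_continuous_on ballI
      differentiable_imp_continuous_within) (auto elim!: allE[of _ "[]"])

lemma cball_fin: "emeasure \<nu> (cball 0 (R + 1)) < \<infinity>"
proof -
  obtain C where "\<And>x. emeasure \<nu> ((\<lambda>y. x + y) ` cball (0::'a) (R + 1)) \<le> ennreal C"
    using tb unfolding translation_bounded_def by (meson compact_cball)
  from this[of 0] have "emeasure \<nu> (cball 0 (R + 1)) \<le> ennreal C" by simp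
  then show ?thesis using ennreal_less_top[of C] by (metis infinity_ennreal_def order.strict_trans1)
qed

definition FF :: "('a \<Rightarrow> complex) \<Rightarrow> 'a \<Rightarrow> 'a \<Rightarrow> complex" where
  "FF f y x = f (x - y) * complex_of_real (hR x) * g x * complex_of_real (hR y) * cnj (g y)"

lemma FF_norm: "norm (FF f y x) = norm (f (x - y)) * hR x * hR y"
  by (simp add: FF_def norm_mult g_norm hR_nonneg)

lemma FF_meas:
  assumes [measurable]: "f \<in> borel_measurable borel"
  shows "case_prod (FF f) \<in> borel_measurable (\<nu> \<Otimes>\<^sub>M \<nu>)"
proof -
  have "case_prod (FF f) \<in> borel_measurable (borel \<Otimes>\<^sub>M borel)"
  proof -
    have [measurable]: "(\<lambda>z. cnj (g z)) \<in> borel_measurable borel"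
      by (intro borel_measurable_continuous_on[OF continuous_on_cnj] g_meas) (rule continuous_on_id)
    show ?thesis unfolding FF_def by measurable
  qed
  then show ?thesis
    by (simp add: measurable_cong_sets[OF sets_pair_measure_cong[OF sets_nu sets_nu] refl])
qed


abbreviation "AA \<equiv> cball (0::'a) (R + 1)"

lemma AA_sets: "AA \<in> sets \<nu>" by (simp add: sets_nu)

lemma FF_sec_meas:
  assumes [measurable]: "f \<in> borel_measurable borel"
  shows "FF f y \<in> borel_measurable \<nu>"
proof -
  have [measurable]: "(\<lambda>z. cnj (g z)) \<in> borel_measurable borel"
    by (intro borel_measurable_continuous_on[OF continuous_on_cnj] g_meas) (rule continuous_on_id)
  have "FF f y \<in> borel_measurable borel" unfolding FF_def by measurable
  then show ?thesis by (simp add: measurable_cong_sets[OF sets_nu refl])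
qed

lemma FF_ptw_bound:
  assumes "\<And>z. norm (f z) \<le> B"
  shows "ennreal (norm (FF f y x)) \<le> ennreal B * indicator AA x * indicator AA y"
proof (cases "x \<in> AA \<and> y \<in> AA")
  case True
  have "norm (FF f y x) \<le> B"
    unfolding FF_norm using assms[of "x - y"] hR_le1[of x] hR_le1[of y] hR_nonneg[of x] hR_nonneg[of y]
    by (metis mult_le_one mult_left_le norm_ge_zero order_trans mult_nonneg_nonneg)
  then show ?thesis using True by (simp add: ennreal_leI)
next
  case False
  then have "FF f y x = 0" using hR_out by (auto simp: FF_def)
  then show ?thesis by simp
qed

lemma FF_inner_nn:
  assumes "\<And>z. norm (f z) \<le> B"
  shows "(\<integral>\<^sup>+x. ennreal (norm (FF f y x)) \<partial>\<nu>) \<le> ennreal B * emeasure \<nu> AA * indicator AA y"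
proof -
  have "(\<integral>\<^sup>+x. ennreal (norm (FF f y x)) \<partial>\<nu>) \<le> (\<integral>\<^sup>+x. (ennreal B * indicator AA y) * indicator AA x \<partial>\<nu>)"
    by (intro nn_integral_mono) (use FF_ptw_bound[where f=f and y=y, OF assms] in \<open>simp add: mult_ac\<close>)
  also have "\<dots> = ennreal B * indicator AA y * emeasure \<nu> AA"
    by (rule nn_integral_cmult_indicator[OF AA_sets])
  finally show ?thesis by (simp add: mult_ac)
qed

lemma FF_inner_int:
  assumes "f \<in> borel_measurable borel" "\<And>z. norm (f z) \<le> B"
  shows "integrable \<nu> (FF f y)"
proof (rule integrableI_bounded)
  show "FF f y \<in> borel_measurable \<nu>" by (rule FF_sec_meas[OF assms(1)])
  have "(\<integral>\<^sup>+x. ennreal (norm (FF f y x)) \<partial>\<nu>) \<le> ennreal B * emeasure \<nu> AA * indicator AA y"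
    by (rule FF_inner_nn[where f=f, OF assms(2)])
  also have "\<dots> < \<infinity>"
    using cball_fin by (auto simp: indicator_def ennreal_mult_less_top)
  finally show "(\<integral>\<^sup>+x. ennreal (norm (FF f y x)) \<partial>\<nu>) < \<infinity>" .
qed

lemma FF_outer_int:
  assumes "f \<in> borel_measurable borel" "\<And>z. norm (f z) \<le> B"
  shows "integrable \<nu> (\<lambda>y. \<integral>x. FF f y x \<partial>\<nu>)"
proof (rule integrableI_bounded)
  interpret sf: sigma_finite_measure \<nu> by (rule tb_sigma_finite[OF tb])
  show "(\<lambda>y. \<integral>x. FF f y x \<partial>\<nu>) \<in> borel_measurable \<nu>"
    by (rule sf.borel_measurable_lebesgue_integral) (rule FF_meas[OF assms(1)])
  have "(\<integral>\<^sup>+y. ennreal (norm (\<integral>x. FF f y x \<partial>\<nu>)) \<partial>\<nu>)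
      \<le> (\<integral>\<^sup>+y. (ennreal B * emeasure \<nu> AA) * indicator AA y \<partial>\<nu>)"
    by (intro nn_integral_mono order_trans[OF norm_integral_le_nn FF_inner_nn[where f=f, OF assms(2)]])
  also have "\<dots> = ennreal B * emeasure \<nu> AA * emeasure \<nu> AA"
    by (rule nn_integral_cmult_indicator[OF AA_sets])
  also have "\<dots> < \<infinity>"
    using cball_fin by (auto simp: ennreal_mult_less_top)
  finally show "(\<integral>\<^sup>+y. ennreal (norm (\<integral>x. FF f y x \<partial>\<nu>)) \<partial>\<nu>) < \<infinity>" .
qed

lemma FF_lin: "FF (\<lambda>x. a * f x + b * f' x) y x = a * FF f y x + b * FF f' y x"
  by (simp add: FF_def algebra_simps)

lemma double_int_lin:
  assumes "f \<in> borel_measurable borel" "\<And>z. norm (f z) \<le> B"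
    and "f' \<in> borel_measurable borel" "\<And>z. norm (f' z) \<le> B'"
  shows "(\<integral>y. (\<integral>x. FF (\<lambda>x. a * f x + b * f' x) y x \<partial>\<nu>) \<partial>\<nu>)
      = a * (\<integral>y. (\<integral>x. FF f y x \<partial>\<nu>) \<partial>\<nu>) + b * (\<integral>y. (\<integral>x. FF f' y x \<partial>\<nu>) \<partial>\<nu>)"
proof -
  have "(\<integral>x. FF (\<lambda>x. a * f x + b * f' x) y x \<partial>\<nu>) = a * (\<integral>x. FF f y x \<partial>\<nu>) + b * (\<integral>x. FF f' y x \<partial>\<nu>)" for y
    unfolding FF_lin
    using FF_inner_int[OF assms(1,2), of y] FF_inner_int[OF assms(3,4), of y] by simp
  then show ?thesis
    using FF_outer_int[OF assms(1,2)] FF_outer_int[OF assms(3,4)] by simp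
qed


lemma FF_est:
  assumes Cd: "\<And>y. (\<integral>\<^sup>+x. ennreal (1 / (1 + norm (x - y)) ^ Suc DIM('a)) \<partial>\<nu>) \<le> ennreal Cd"
    and Cd0: "Cd \<ge> 0"
    and Mb: "\<And>z. (1 + norm z) ^ Suc DIM('a) * norm (f z) \<le> M"
  shows "norm (\<integral>y. (\<integral>x. FF f y x \<partial>\<nu>) \<partial>\<nu>) \<le> M * Cd * measure \<nu> AA"
proof -
  define N where "N = Suc DIM('a)"
  have M0: "M \<ge> 0" using Mb[of 0] by (metis mult_nonneg_nonneg norm_ge_zero order_trans zero_le_one add_nonneg_nonneg zero_le_power)
  have fz: "norm (f z) \<le> M * (1 / (1 + norm z) ^ N)" for z
  proof -
    have "0 < (1 + norm (z::'a)) ^ N" by (simp add: add_pos_nonneg)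
    then show ?thesis using Mb[of z] unfolding N_def by (simp add: pos_le_divide_eq mult.commute)
  qed
  have wmeas: "(\<lambda>x. ennreal (1 / (1 + norm (x - y)) ^ N)) \<in> borel_measurable \<nu>" for y
  proof -
    have "(\<lambda>x. ennreal (1 / (1 + norm (x - y)) ^ N)) \<in> borel_measurable borel" by measurable
    then show ?thesis by (simp add: measurable_cong_sets[OF sets_nu refl])
  qed
  have ptw: "ennreal (norm (FF f y x)) \<le> (ennreal M * indicator AA y) * ennreal (1 / (1 + norm (x - y)) ^ N)" for x y
  proof (cases "y \<in> AA")
    case True
    have "norm (FF f y x) \<le> norm (f (x - y))"
    proof -
      have "hR x * hR y \<le> 1" using hR_le1[of x] hR_le1[of y] hR_nonneg[of x] hR_nonneg[of y]
        by (intro mult_le_one) auto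
      then have "norm (f (x - y)) * (hR x * hR y) \<le> norm (f (x - y))" by (intro mult_left_le) auto
      then show ?thesis unfolding FF_norm by (simp add: mult.assoc)
    qed
    also have "\<dots> \<le> M * (1 / (1 + norm (x - y)) ^ N)" by (rule fz)
    finally show ?thesis using True M0 by (simp add: ennreal_mult[symmetric] ennreal_leI)
  next
    case False
    then have "FF f y x = 0" using hR_out by (auto simp: FF_def)
    then show ?thesis by simp
  qed
  have inner: "ennreal (norm (\<integral>x. FF f y x \<partial>\<nu>)) \<le> (ennreal M * ennreal Cd) * indicator AA y" for y
  proof -
    have "ennreal (norm (\<integral>x. FF f y x \<partial>\<nu>)) \<le> (\<integral>\<^sup>+x. ennreal (norm (FF f y x)) \<partial>\<nu>)"
      by (rule norm_integral_le_nn)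
    also have "\<dots> \<le> (\<integral>\<^sup>+x. (ennreal M * indicator AA y) * ennreal (1 / (1 + norm (x - y)) ^ N) \<partial>\<nu>)"
      by (intro nn_integral_mono ptw)
    also have "\<dots> = (ennreal M * indicator AA y) * (\<integral>\<^sup>+x. ennreal (1 / (1 + norm (x - y)) ^ N) \<partial>\<nu>)"
      by (rule nn_integral_cmult[OF wmeas])
    also have "\<dots> \<le> (ennreal M * indicator AA y) * ennreal Cd"
      by (intro mult_left_mono) (use Cd[of y] in \<open>auto simp only: N_def zero_le\<close>)
    finally show ?thesis by (simp add: mult_ac)
  qed
  have "ennreal (norm (\<integral>y. (\<integral>x. FF f y x \<partial>\<nu>) \<partial>\<nu>)) \<le> (\<integral>\<^sup>+y. ennreal (norm (\<integral>x. FF f y x \<partial>\<nu>)) \<partial>\<nu>)"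
    by (rule norm_integral_le_nn)
  also have "\<dots> \<le> (\<integral>\<^sup>+y. (ennreal M * ennreal Cd) * indicator AA y \<partial>\<nu>)"
    by (intro nn_integral_mono inner)
  also have "\<dots> = ennreal M * ennreal Cd * emeasure \<nu> AA"
    by (rule nn_integral_cmult_indicator[OF AA_sets])
  also have "\<dots> = ennreal (M * Cd * measure \<nu> AA)"
    using cball_fin M0 Cd0 by (simp add: emeasure_eq_ennreal_measure less_top ennreal_mult)
  finally show ?thesis using M0 Cd0 by (simp add: ennreal_le_iff)
qed
end


definition condM :: "nat \<Rightarrow> ('a::euclidean_space \<Rightarrow> complex) \<Rightarrow> real \<Rightarrow> bool" where
  "condM N f M \<longleftrightarrow> (\<forall>x vs. length vs \<le> N \<longrightarrow> set vs \<subseteq> Basis \<longrightarrow>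
             (1 + norm x) ^ N * norm (pderivs vs f x) \<le> M)"

definition Bset :: "real \<Rightarrow> nat \<Rightarrow> (('a::euclidean_space \<Rightarrow> complex) \<Rightarrow> complex) set" where
  "Bset K N = {T. (\<forall>f. f \<notin> schwartz \<longrightarrow> T f = 0) \<and>
     (\<forall>f\<in>schwartz. \<forall>g\<in>schwartz. \<forall>a b. T (\<lambda>x. a * f x + b * g x) = a * T f + b * T g) \<and>
     (\<forall>f\<in>schwartz. \<forall>M. condM N f M \<longrightarrow> norm (T f) \<le> K * M)}"

lemma Bset_tempered: "Bset K N \<subseteq> tempered_distributions"
  unfolding Bset_def tempered_distributions_def condM_def by blast

lemma condM_exists:
  fixes f :: "'a::euclidean_space \<Rightarrow> complex"
  assumes "f \<in> schwartz"
  shows "\<exists>M. condM N f M"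
proof -
  define L where "L = {vs. set vs \<subseteq> (Basis::'a set) \<and> length vs \<le> N}"
  have finL: "finite L" unfolding L_def by (rule finite_lists_length_le) simp
  have "\<forall>vs\<in>L. \<exists>B. \<forall>x. (1 + norm x) ^ N * norm (pderivs vs f x) \<le> B"
    using assms unfolding schwartz_def L_def bounded_iff by (auto simp: norm_mult)
  then obtain B where B: "\<And>vs x. vs \<in> L \<Longrightarrow> (1 + norm x) ^ N * norm (pderivs vs f x) \<le> B vs"
    by metis
  have "condM N f (\<Sum>vs\<in>L. max 0 (B vs))"
    unfolding condM_def
  proof (intro allI impI)
    fix x :: 'a and vs :: "'a list" assume "length vs \<le> N" "set vs \<subseteq> Basis"
    then have vs: "vs \<in> L" by (simp add: L_def)
    have "(1 + norm x) ^ N * norm (pderivs vs f x) \<le> max 0 (B vs)" using B[OF vs, of x] by (simp add: le_max_iff_disj)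
    also have "\<dots> \<le> (\<Sum>vs\<in>L. max 0 (B vs))"
      by (rule member_le_sum[OF vs _ finL]) simp
    finally show "(1 + norm x) ^ N * norm (pderivs vs f x) \<le> (\<Sum>vs\<in>L. max 0 (B vs))" .
  qed
  then show ?thesis by blast
qed

lemma cont_eval: "continuous_on UNIV (\<lambda>T::('a \<Rightarrow> complex) \<Rightarrow> complex. T f)"
  by simp

lemma Bset_closed: "closed (Bset K N :: (('a::euclidean_space \<Rightarrow> complex) \<Rightarrow> complex) set)"
proof -
  have eq: "Bset K N = (\<Inter>f\<in>-schwartz. {T. T f = 0}) \<inter>
     (\<Inter>f\<in>schwartz. \<Inter>g\<in>schwartz. \<Inter>a. \<Inter>b. {T::('a \<Rightarrow> complex) \<Rightarrow> complex. T (\<lambda>x. a * f x + b * g x) = a * T f + b * T g}) \<inter>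
     (\<Inter>f\<in>schwartz. \<Inter>M\<in>{M. condM N f M}. {T. norm (T f) \<le> K * M})"
    unfolding Bset_def by auto
  show ?thesis unfolding eq
    by (intro closed_Int closed_INT ballI closed_Collect_eq closed_Collect_le continuous_intros continuous_on_product_coordinates)
qed

lemma Bset_compact:
  assumes "K \<ge> 0"
  shows "compact (Bset K N :: (('a::euclidean_space \<Rightarrow> complex) \<Rightarrow> complex) set)"
proof -
  define bd where "bd f = (if f \<in> schwartz then K * (SOME M. condM N f M) else 0)" for f :: "'a \<Rightarrow> complex"
  have sub: "Bset K N \<subseteq> PiE UNIV (\<lambda>f. cball 0 (bd f))"
  proof
    fix T :: "('a \<Rightarrow> complex) \<Rightarrow> complex" assume T: "T \<in> Bset K N"
    have "T f \<in> cball 0 (bd f)" for f :: "'a \<Rightarrow> complex"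
    proof (cases "f \<in> schwartz")
      case True
      have "condM N f (SOME M. condM N f M)" by (rule someI_ex[OF condM_exists[OF True]])
      then show ?thesis using T True unfolding Bset_def bd_def by auto
    next
      case False then show ?thesis using T unfolding Bset_def bd_def by auto
    qed
    then show "T \<in> PiE UNIV (\<lambda>f. cball 0 (bd f))" by auto
  qed
  have "compactin (product_topology (\<lambda>f::'a \<Rightarrow> complex. euclidean) UNIV) (PiE UNIV (\<lambda>f::'a \<Rightarrow> complex. cball (0::complex) (bd f)))"
    by (subst compactin_PiE) auto
  then have "compact (PiE UNIV (\<lambda>f::'a \<Rightarrow> complex. cball (0::complex) (bd f)))"
    by (simp add: euclidean_product_topology)
  then have "compact (PiE UNIV (\<lambda>f. cball 0 (bd f)) \<inter> Bset K N)"
    by (intro compact_Int_closed Bset_closed)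
  also have "PiE UNIV (\<lambda>f. cball 0 (bd f)) \<inter> Bset K N = Bset K N" using sub by blast
  finally show ?thesis .
qed

lemma precompact_from_Bset:
  assumes "K \<ge> 0" "A \<subseteq> Bset K N"
  shows "weak_star_precompact A"
proof -
  have cl: "closure A \<subseteq> Bset K N" using assms(2) Bset_closed by (rule closure_minimal)
  have "tempered_distributions \<inter> closure A = closure A" using cl Bset_tempered by blast
  moreover have "compact (closure A)"
    using compact_Int_closed[OF Bset_compact[OF assms(1), of N] closed_closure[of A]] cl
    by (simp add: Int_absorb1)
  ultimately show ?thesis unfolding weak_star_precompact_def
    using assms(2) Bset_tempered[of K N] by auto
qed



lemma schwartz_meas: "f \<in> schwartz \<Longrightarrow> f \<in> borel_measurable borel"
  by (rule borel_measurable_continuous_onI[OF schwartz_cont])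

lemma condM_M0: "condM N f M \<Longrightarrow> (\<forall>z. (1 + norm z) ^ N * norm (f z) \<le> M)"
  unfolding condM_def by (auto elim!: allE[of _ "[]"] simp del: One_nat_def)

theorem proposition3p9:
  fixes \<nu> :: "'a::euclidean_space measure" and g :: "'a \<Rightarrow> complex"
    and h :: "real \<Rightarrow> 'a \<Rightarrow> real"
  assumes "translation_bounded \<nu> g"
    and "smooth_approx_van_Hove h"
  shows "weak_star_precompact {autocorr_approx \<nu> g (h R) R | R. R \<ge> 1}"
proof -
  note tb = assms(1)
  obtain Cd where Cd: "Cd \<ge> 0" "\<And>y. (\<integral>\<^sup>+x. ennreal (1 / (1 + norm (x - y)) ^ Suc DIM('a)) \<partial>\<nu>) \<le> ennreal Cd"
    using tb_decay[OF tb] by blast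
  obtain Cg where Cg: "Cg \<ge> 0" "\<And>y r. r \<ge> 1 \<Longrightarrow> emeasure \<nu> (cball y r) \<le> ennreal (Cg * r ^ DIM('a))"
    using tb_growth[OF tb] by blast
  define w where "w = unit_ball_vol (real DIM('a))"
  have w0: "w > 0" unfolding w_def by simp
  define K where "K = Cd * Cg * 2 ^ DIM('a) / w"
  have K0: "K \<ge> 0" unfolding K_def using Cd Cg w0 by simp
  have mem: "autocorr_approx \<nu> g (h R) R \<in> Bset K (Suc DIM('a))" if R: "R \<ge> 1" for R
  proof -
    have hs: "smooth_fun (h R)" and hb: "\<And>x. indicator (ball 0 R) x \<le> h R x \<and> h R x \<le> indicator (cball 0 (R + 1)) x"
      using assms(2) R unfolding smooth_approx_van_Hove_def by auto
    define c where "c = complex_of_real (1 / measure lborel (ball (0::'a) R))"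
    have T: "autocorr_approx \<nu> g (h R) R f =
        (if f \<in> schwartz then c * (\<integral>y. (\<integral>x. FF g (h R) f y x \<partial>\<nu>) \<partial>\<nu>) else 0)" for f
      unfolding autocorr_approx_def c_def FF_def[OF tb hs hb] ..
    have vol: "measure lborel (ball (0::'a) R) = w * R ^ DIM('a)"
      using content_ball[of R "0::'a"] R unfolding w_def by simp
    have mAA: "measure \<nu> (cball 0 (R + 1)) \<le> Cg * (R + 1) ^ DIM('a)"
    proof -
      have e: "emeasure \<nu> (cball 0 (R + 1)) \<le> ennreal (Cg * (R + 1) ^ DIM('a))"
        using Cg(2)[of "R + 1" 0] R by simp
      have "emeasure \<nu> (cball 0 (R + 1)) < \<infinity>"
        using order.strict_trans1[OF e ennreal_less_top] by (simp add: infinity_ennreal_def)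
      then have "emeasure \<nu> (cball 0 (R + 1)) \<noteq> \<infinity>" by simp
      then show ?thesis using e Cg(1) R
        by (simp add: emeasure_eq_ennreal_measure ennreal_le_iff)
    qed
    show ?thesis
      unfolding Bset_def
    proof (intro CollectI conjI ballI allI impI)
      fix f :: "'a \<Rightarrow> complex" assume "f \<notin> schwartz" then show "autocorr_approx \<nu> g (h R) R f = 0" by (simp add: T)
    next
      fix f f' :: "'a \<Rightarrow> complex" and a b assume f: "f \<in> schwartz" and f': "f' \<in> schwartz"
      obtain B where B: "\<And>z. norm (f z) \<le> B" using schwartz_bdd[OF f] by blast
      obtain B' where B': "\<And>z. norm (f' z) \<le> B'" using schwartz_bdd[OF f'] by blast
      show "autocorr_approx \<nu> g (h R) R (\<lambda>x. a * f x + b * f' x) =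
          a * autocorr_approx \<nu> g (h R) R f + b * autocorr_approx \<nu> g (h R) R f'"
        unfolding T using schwartz_lin[OF f f', of a b] f f'
          double_int_lin[OF tb hs hb schwartz_meas[OF f] B schwartz_meas[OF f'] B', of a b]
        by (simp add: algebra_simps)
    next
      fix f :: "'a \<Rightarrow> complex" and M assume f: "f \<in> schwartz" and cM: "condM (Suc DIM('a)) f M"
      have Mb: "\<And>z. (1 + norm z) ^ Suc DIM('a) * norm (f z) \<le> M" using condM_M0[OF cM] by blast
      have M0: "M \<ge> 0"
      proof -
        have "0 \<le> (1 + norm (0::'a)) ^ Suc DIM('a) * norm (f 0)" by simp
        then show ?thesis using Mb[of 0] by linarith
      qed
      have I: "norm (\<integral>y. (\<integral>x. FF g (h R) f y x \<partial>\<nu>) \<partial>\<nu>) \<le> M * Cd * (Cg * (R + 1) ^ DIM('a))"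
        using order_trans[OF FF_est[OF tb hs hb Cd(2) Cd(1) Mb] mult_left_mono[OF mAA]] M0 Cd(1)
        by simp
      have R2: "(R + 1) ^ DIM('a) \<le> 2 ^ DIM('a) * R ^ DIM('a)"
      proof -
        have "(R + 1) ^ DIM('a) \<le> (2 * R) ^ DIM('a)" using R by (intro power_mono) auto
        then show ?thesis by (simp add: power_mult_distrib)
      qed
      have Rp: "R ^ DIM('a) > 0" using R by simp
      have "norm (autocorr_approx \<nu> g (h R) R f) = (1 / (w * R ^ DIM('a))) * norm (\<integral>y. (\<integral>x. FF g (h R) f y x \<partial>\<nu>) \<partial>\<nu>)"
        unfolding T c_def vol using f w0 Rp R by (simp add: norm_mult norm_divide norm_power)
      also have "\<dots> \<le> (1 / (w * R ^ DIM('a))) * (M * Cd * (Cg * (2 ^ DIM('a) * R ^ DIM('a))))"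
      proof -
        have c1: "Cg * (R + 1) ^ DIM('a) \<le> Cg * (2 ^ DIM('a) * R ^ DIM('a))"
          using R2 Cg(1) by (rule mult_left_mono)
        have "M * Cd * (Cg * (R + 1) ^ DIM('a)) \<le> M * Cd * (Cg * (2 ^ DIM('a) * R ^ DIM('a)))"
          by (rule mult_left_mono[OF c1]) (use M0 Cd(1) in simp)
        with I have "norm (\<integral>y. (\<integral>x. FF g (h R) f y x \<partial>\<nu>) \<partial>\<nu>) \<le> M * Cd * (Cg * (2 ^ DIM('a) * R ^ DIM('a)))"
          by linarith
        then show ?thesis by (rule mult_left_mono) (use w0 Rp in simp)
      qed
      also have "\<dots> = K * M"
      proof -
        have gen: "1 / (w * r) * (M * Cd * (Cg * (p * r))) = Cd * Cg * p / w * M" if "r > 0" for r p :: real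
          using w0 that by (simp add: field_simps)
        show ?thesis unfolding K_def by (rule gen[OF Rp])
      qed
      finally show "norm (autocorr_approx \<nu> g (h R) R f) \<le> K * M" .
    qed
  qed
  show ?thesis
    by (rule precompact_from_Bset[OF K0]) (use mem in auto)
qed

end
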